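(* Let $q$ be a prime power and let $C\subseteq \mathrm{GF}(q^m)^n$ be a (linear or nonlinear) code with $n\le m$, $|C|=q^{mk}$ for an integer $1\le k\le n$, and minimum rank distance $d_{\mathrm R}=n-k+1=2t+1$ for an integer $t\ge 0$. Suppose a codeword $\mathbf c\in C$ is transmitted and $\mathbf y=\mathbf c+\mathbf e$ is received, where the additive error $\mathbf e\in\mathrm{GF}(q^m)^n$ is random with a distribution under which all errors of the same rank are equally likely. Then the probability $P_E(t)$ that the bounded rank distance decoder makes a decoder error satisfies $$P_E(t)<K_q^{-2}q^{-t^2},\qquad\text{where } K_q=\prod_{j=1}^{\infty}(1-q^{-j}).$$
   Context: For $\mathbf x=(x_0,\dots,x_{n-1})\in\mathrm{GF}(q^m)^n$, $\mathrm{rk}(\mathbf x)$ is the dimension over $\mathrm{GF}(q)$ of the $\mathrm{GF}(q)$-span of $x_0,\dots,x_{n-1}$ (equivalently the rank of the $m\times n$ matrix over $\mathrm{GF}(q)$ obtained by expanding the coordinates in a basis of $\mathrm{GF}(q^m)$ over $\mathrm{GF}(q)$). The minimum rank distance of $C$ is the minimum of $\mathrm{rk}(\mathbf c-\mathbf d)$ over distinct codewords. The bounded rank distance decoder, given $\mathbf y$, outputs the (unique) codeword $\mathbf c'$ with $\mathrm{rk}(\mathbf y-\mathbf c')\le t$ if one exists and declares failure otherwise; a decoder error is the event that it outputs some $\mathbf c'\ne\mathbf c$. *)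

theory Defs
  imports "HOL-Analysis.Analysis" "HOL-Probability.Probability"
begin

text \<open>GF(q) is modelled by a finite field type 'K, GF(q^m) by a finite field type 'F,
  and GF(q) sits inside GF(q^m) via a field embedding emb. Then GF(q^m) is a
  GF(q)-vector space with scalar multiplication c x = emb c * x.\<close>

definition field_embedding :: "('K::field \<Rightarrow> 'F::field) \<Rightarrow> bool" where
  "field_embedding emb \<longleftrightarrow> emb 1 = 1 \<and> (\<forall>a b. emb (a + b) = emb a + emb b)
      \<and> (\<forall>a b. emb (a * b) = emb a * emb b)"

definition rk :: "('K::field \<Rightarrow> 'F::field) \<Rightarrow> 'F list \<Rightarrow> nat" where
  "rk emb x = vector_space.dim (\<lambda>c v. emb c * v) (set x)"

definition vsub :: "'F::field list \<Rightarrow> 'F list \<Rightarrow> 'F list" where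
  "vsub x y = map2 (-) x y"

definition vadd :: "'F::field list \<Rightarrow> 'F list \<Rightarrow> 'F list" where
  "vadd x y = map2 (+) x y"

definition min_rank_dist :: "('K::field \<Rightarrow> 'F::field) \<Rightarrow> 'F list set \<Rightarrow> nat" where
  "min_rank_dist emb C = Min {rk emb (vsub c d) | c d. c \<in> C \<and> d \<in> C \<and> c \<noteq> d}"

text \<open>Decoder error event for the bounded rank distance decoder with radius t,
  when c is sent and error e occurs: some codeword c' \<noteq> c lies within rank
  distance t of y = c + e (such a codeword is then the unique one output).\<close>
definition decoder_error :: "('K::field \<Rightarrow> 'F::field) \<Rightarrow> 'F list set \<Rightarrow> nat \<Rightarrow> 'F list \<Rightarrow> 'F list \<Rightarrow> bool" where
  "decoder_error emb C t c e \<longleftrightarrow> (\<exists>c'\<in>C. c' \<noteq> c \<and> rk emb (vsub (vadd c e) c') \<le> t)"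

end

theory Submission
  imports Defs
begin

lemma fe_zero: "field_embedding emb \<Longrightarrow> emb 0 = 0"
proof -
  assume fe: "field_embedding emb"
  then have "emb (0 + 0) = emb 0 + emb 0" unfolding field_embedding_def by blast
  then show "emb 0 = 0" by (metis add_0_right add_left_cancel)
qed

lemma fe_diff: "field_embedding emb \<Longrightarrow> emb (a - b) = emb a - emb b"
proof -
  assume fe: "field_embedding emb"
  then have "emb (a - b + b) = emb (a - b) + emb b" unfolding field_embedding_def by blast
  then show ?thesis by (simp add: eq_diff_eq)
qed

lemma fe_inj: "field_embedding (emb::'K::field \<Rightarrow> 'F::field) \<Longrightarrow> inj emb"
proof (rule injI)
  fix a b assume fe: "field_embedding emb" and e: "emb a = emb b"
  have s: "emb (a - b) = 0" using fe_diff[OF fe] e by simp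
  show "a = b"
  proof (rule ccontr)
    assume "a \<noteq> b"
    then have "emb ((a - b) * inverse (a - b)) = 1" using fe by (simp add: field_embedding_def)
    moreover have "emb ((a - b) * inverse (a - b)) = emb (a - b) * emb (inverse (a - b))"
      using fe unfolding field_embedding_def by blast
    ultimately show False using s by simp
  qed
qed

lemma length_vadd[simp]: "length (vadd x y) = min (length x) (length y)"
  by (simp add: vadd_def)
lemma length_vsub[simp]: "length (vsub x y) = min (length x) (length y)"
  by (simp add: vsub_def)
lemma nth_vadd: "i < length x \<Longrightarrow> i < length y \<Longrightarrow> vadd x y ! i = x ! i + y ! i"
  by (simp add: vadd_def)
lemma nth_vsub: "i < length x \<Longrightarrow> i < length y \<Longrightarrow> vsub x y ! i = x ! i - y ! i"
  by (simp add: vsub_def)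
lemma vsub_map: "vsub (map f xs) (map g xs) = map (\<lambda>z. f z - g z) xs"
  by (induction xs) (auto simp: vsub_def)
lemma vadd_map: "vadd (map f xs) (map g xs) = map (\<lambda>z. f z + g z) xs"
  by (induction xs) (auto simp: vadd_def)
lemma map_vadd: "(\<And>a b. h (a + b) = h a + h b) \<Longrightarrow> map h (vadd x y) = vadd (map h x) (map h y)"
proof (induction x arbitrary: y)
  case Nil then show ?case by (simp add: vadd_def)
next
  case (Cons a x) then show ?case by (cases y) (auto simp: vadd_def)
qed


lemma avg_bound:
  fixes g :: "'a \<Rightarrow> real" and Orb :: "'a \<Rightarrow> 'a set"
  assumes fV: "finite V" and XV: "X \<subseteq> V"
    and OV: "\<forall>x\<in>X. Orb x \<subseteq> V" and Ox: "\<forall>x\<in>X. x \<in> Orb x"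
    and gc: "\<forall>x\<in>X. \<forall>y\<in>Orb x. g y = g x"
    and g0: "\<forall>y\<in>V. g y \<ge> 0"
    and sym: "\<forall>x\<in>X. \<forall>y\<in>Orb x. x \<in> Orb y"
    and rho: "\<rho> \<ge> 0"
    and bd: "\<forall>x\<in>X. \<forall>y\<in>Orb x. real (card (X \<inter> Orb y)) \<le> \<rho> * real (card (Orb x))"
  shows "(\<Sum>x\<in>X. g x) \<le> \<rho> * (\<Sum>y\<in>V. g y)"
proof -
  have fX: "finite X" using fV XV finite_subset by blast
  have step1: "g x = (\<Sum>y\<in>V. if y \<in> Orb x then g y / real (card (Orb x)) else 0)" if x: "x \<in> X" for x
  proof -
    have fO: "finite (Orb x)" using OV x fV finite_subset by blast
    have cpos: "real (card (Orb x)) > 0" using Ox x fO card_gt_0_iff by fastforce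
    have "(\<Sum>y\<in>V. if y \<in> Orb x then g y / real (card (Orb x)) else 0)
        = (\<Sum>y\<in>Orb x. g y / real (card (Orb x)))"
    proof -
      have "{y \<in> V. y \<in> Orb x} = Orb x" using OV x by blast
      then show ?thesis
        using sum.inter_filter[OF fV, of "\<lambda>y. g y / real (card (Orb x))" "\<lambda>y. y \<in> Orb x"] by simp
    qed
    also have "\<dots> = (\<Sum>y\<in>Orb x. g x / real (card (Orb x)))"
      by (rule sum.cong[OF refl]) (use gc x in auto)
    also have "\<dots> = g x" using cpos by simp
    finally show ?thesis by simp
  qed
  have step3: "(\<Sum>x\<in>X. if y \<in> Orb x then g y / real (card (Orb x)) else 0) \<le> \<rho> * g y" if y: "y \<in> V" for y
  proof -
    define A where "A = {x\<in>X. y \<in> Orb x}"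
    have fA: "finite A" unfolding A_def using fX by simp
    have "(\<Sum>x\<in>X. if y \<in> Orb x then g y / real (card (Orb x)) else 0) = (\<Sum>x\<in>A. g y / real (card (Orb x)))"
      unfolding A_def using sum.inter_filter[OF fX, of "\<lambda>x. g y / real (card (Orb x))" "\<lambda>x. y \<in> Orb x"]
      by simp
    also have "\<dots> \<le> \<rho> * g y"
    proof (cases "A = {}")
      case True then show ?thesis using rho g0 y by simp
    next
      case False
      then obtain x0 where x0: "x0 \<in> A" by blast
      have AX: "A \<subseteq> X \<inter> Orb y" unfolding A_def using sym by blast
      have fXO: "finite (X \<inter> Orb y)" using fX by simp
      have cpos: "real (card (X \<inter> Orb y)) > 0" using x0 AX fXO card_gt_0_iff by fastforce
      have each: "g y / real (card (Orb x)) \<le> g y * (\<rho> / real (card (X \<inter> Orb y)))" if x: "x \<in> A" for x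
      proof -
        have xX: "x \<in> X" and yO: "y \<in> Orb x" using x unfolding A_def by auto
        have fO: "finite (Orb x)" using OV xX fV finite_subset by blast
        have cO: "real (card (Orb x)) > 0" using Ox xX fO card_gt_0_iff by fastforce
        have b: "real (card (X \<inter> Orb y)) \<le> \<rho> * real (card (Orb x))" using bd xX yO by blast
        have "1 / real (card (Orb x)) \<le> \<rho> / real (card (X \<inter> Orb y))"
          using b cO cpos by (simp add: divide_simps mult.commute)
        then have "g y * (1 / real (card (Orb x))) \<le> g y * (\<rho> / real (card (X \<inter> Orb y)))"
          using g0 y by (intro mult_left_mono) auto
        then show ?thesis by simp
      qed
      have "(\<Sum>x\<in>A. g y / real (card (Orb x))) \<le> (\<Sum>x\<in>A. g y * (\<rho> / real (card (X \<inter> Orb y))))"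
        by (rule sum_mono) (rule each)
      also have "\<dots> = real (card A) * (g y * (\<rho> / real (card (X \<inter> Orb y))))" by simp
      also have "\<dots> \<le> real (card (X \<inter> Orb y)) * (g y * (\<rho> / real (card (X \<inter> Orb y))))"
        using card_mono[OF fXO AX] g0 y rho by (intro mult_right_mono) auto
      also have "\<dots> = \<rho> * g y" using cpos by simp
      finally show ?thesis .
    qed
    finally show ?thesis .
  qed
  have "(\<Sum>x\<in>X. g x) = (\<Sum>x\<in>X. \<Sum>y\<in>V. if y \<in> Orb x then g y / real (card (Orb x)) else 0)"
    by (rule sum.cong[OF refl]) (rule step1)
  also have "\<dots> = (\<Sum>y\<in>V. \<Sum>x\<in>X. if y \<in> Orb x then g y / real (card (Orb x)) else 0)"
    by (rule sum.swap)
  also have "\<dots> \<le> (\<Sum>y\<in>V. \<rho> * g y)" by (rule sum_mono) (rule step3)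
  also have "\<dots> = \<rho> * (\<Sum>y\<in>V. g y)" by (simp add: sum_distrib_left)
  finally show ?thesis .
qed


lemma prod_lower:
  fixes q :: real
  assumes q: "q > 1" and w: "w \<le> D"
  shows "(\<Prod>i<w. q^D - q^i) \<ge> q^(D*w) * (\<Prod>j<D. 1 - 1/q^(Suc j))"
proof -
  have qp: "q^D > 0" using q by simp
  have e1: "(\<Prod>i<w. q^D - q^i) = q^(D*w) * (\<Prod>i<w. 1 - q^i/q^D)"
  proof -
    have "(\<Prod>i<w. q^D - q^i) = (\<Prod>i<w. q^D * (1 - q^i/q^D))"
      by (rule prod.cong[OF refl]) (use qp q in \<open>simp add: field_simps\<close>)
    also have "\<dots> = (\<Prod>i<w. q^D) * (\<Prod>i<w. 1 - q^i/q^D)" by (rule prod.distrib)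
    also have "(\<Prod>i<w. q^D) = q^(D*w)" by (simp add: power_mult)
    finally show ?thesis .
  qed
  have f01: "0 \<le> 1 - q^i/q^D \<and> 1 - q^i/q^D \<le> 1" if "i < D" for i
  proof -
    have "q^i \<le> q^D" using q that by (intro power_increasing) auto
    moreover have "0 \<le> q^i" using q by simp
    ultimately show ?thesis using qp by (simp add: divide_simps)
  qed
  have e2: "(\<Prod>i<D. 1 - q^i/q^D) \<le> (\<Prod>i<w. 1 - q^i/q^D)"
  proof -
    have s: "{..<D} = {..<w} \<union> {w..<D}" using w by auto
    have "(\<Prod>i<D. 1 - q^i/q^D) = (\<Prod>i<w. 1 - q^i/q^D) * (\<Prod>i\<in>{w..<D}. 1 - q^i/q^D)"
      unfolding s by (rule prod.union_disjoint) auto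
    also have "\<dots> \<le> (\<Prod>i<w. 1 - q^i/q^D) * 1"
    proof (rule mult_left_mono)
      show "(\<Prod>i\<in>{w..<D}. 1 - q^i/q^D) \<le> 1" by (rule prod_le_1) (use f01 in auto)
      show "0 \<le> (\<Prod>i<w. 1 - q^i/q^D)" by (rule prod_nonneg) (use f01 w in auto)
    qed
    finally show ?thesis by simp
  qed
  have e3: "(\<Prod>i<D. 1 - q^i/q^D) = (\<Prod>j<D. 1 - 1/q^(Suc j))"
  proof (rule prod.reindex_bij_witness[where i="\<lambda>k. D - 1 - k" and j="\<lambda>k. D - 1 - k"])
    fix a assume a: "a \<in> {..<D}"
    show "D - 1 - (D - 1 - a) = a" using a by auto
    show "D - 1 - a \<in> {..<D}" using a by auto
    have dd: "a + Suc (D - 1 - a) = D" using a by simp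
    have "q^a * q^(Suc (D - 1 - a)) = q^D" unfolding power_add[symmetric] dd ..
    then have "q^D = q^a * q^(Suc (D - 1 - a))" by simp
    then show "1 - 1 / q ^ Suc (D - 1 - a) = 1 - q ^ a / q ^ D" using q by (simp add: divide_simps)
  qed auto
  have "q^(D*w) * (\<Prod>j<D. 1 - 1/q^(Suc j)) \<le> q^(D*w) * (\<Prod>i<w. 1 - q^i/q^D)"
    using e2 e3 q by (intro mult_left_mono) auto
  then show ?thesis using e1 by simp
qed

lemma K_props:
  fixes q :: real
  assumes q: "q > 1"
  shows "prodinf (\<lambda>j. 1 - 1/q^Suc j) > 0" and "prodinf (\<lambda>j. 1 - 1/q^Suc j) < (\<Prod>j<a. 1 - 1/q^Suc j)"
proof -
  define f where "f = (\<lambda>j::nat. 1 - 1/q^Suc j)"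
  have fpos: "f j > 0" for j
  proof -
    have "1 < q^Suc j" using q by (intro one_less_power) auto
    then show ?thesis unfolding f_def by (simp add: divide_simps)
  qed
  have fle: "f j < 1" for j unfolding f_def using q by simp
  have "summable (\<lambda>i. (1/q) * (1/q)^i)"
    by (rule summable_mult, rule summable_geometric) (use q in simp)
  moreover have "norm (f i - 1) = (1/q) * (1/q)^i" for i
    unfolding f_def using q by (simp add: power_divide)
  ultimately have "summable (\<lambda>i. norm (f i - 1))" by simp
  then have cp: "convergent_prod f"
    by (intro abs_convergent_prod_imp_convergent_prod summable_imp_abs_convergent_prod)
  have hp: "f has_prod prodinf f" using cp by (rule convergent_prod_has_prod)
  show "prodinf (\<lambda>j. 1 - 1/q^Suc j) > 0" using has_prod_pos[OF hp fpos] unfolding f_def .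
  have mono: "(\<Prod>j<n. f j) \<le> (\<Prod>j<Suc a. f j)" if "Suc a \<le> n" for n
    using that
  proof (induction n rule: dec_induct)
    case base then show ?case by simp
  next
    case (step n)
    have "(\<Prod>j<Suc n. f j) = (\<Prod>j<n. f j) * f n" by simp
    also have "\<dots> \<le> (\<Prod>j<n. f j) * 1"
      using fle[of n] by (intro mult_left_mono prod_nonneg) (auto intro: less_imp_le fpos)
    finally show ?case using step.IH by simp
  qed
  have "prodinf f \<le> (\<Prod>j<Suc a. f j)"
    by (rule prodinf_le_const[OF cp]) (rule mono)
  also have "\<dots> = (\<Prod>j<a. f j) * f a" by simp
  also have "\<dots> < (\<Prod>j<a. f j) * 1"
    using fle[of a] by (intro mult_strict_left_mono prod_pos) (auto intro: fpos)
  finally show "prodinf (\<lambda>j. 1 - 1/q^Suc j) < (\<Prod>j<a. 1 - 1/q^Suc j)" unfolding f_def by simp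
qed

locale embctx =
  fixes emb :: "'K::{finite,field} \<Rightarrow> 'F::{finite,field}"
  assumes emb: "field_embedding emb"
begin

sublocale Kv: vector_space "\<lambda>c (v::'F). emb c * v"
  apply unfold_locales
  using emb unfolding field_embedding_def by (auto simp: algebra_simps)

sublocale Kv: finite_dimensional_vector_space "\<lambda>c (v::'F). emb c * v" "Kv.extend_basis {}"
proof
  show "finite (Kv.extend_basis {})" by simp
  show "Kv.independent (Kv.extend_basis {})"
    by (rule Kv.independent_extend_basis[OF Kv.independent_empty])
  show "Kv.span (Kv.extend_basis {}) = UNIV"
    by (rule Kv.span_extend_basis[OF Kv.independent_empty])
qed

lemma emb0[simp]: "emb 0 = 0" using fe_zero emb by blast
lemma emb1[simp]: "emb 1 = 1" using emb by (simp add: field_embedding_def)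
lemma emb_add: "emb (a + b) = emb a + emb b" using emb by (simp add: field_embedding_def)
lemma emb_mult: "emb (a * b) = emb a * emb b" using emb by (simp add: field_embedding_def)
lemma emb_inj: "emb a = emb b \<longleftrightarrow> a = b" using fe_inj[OF emb] by (auto dest: injD)
lemma emb_diff: "emb (a - b) = emb a - emb b" using fe_diff[OF emb] .

lemma card_span:
  assumes ind: "Kv.independent S"
  shows "card (Kv.span S) = CARD('K) ^ card S"
proof -
  have fS: "finite S" using ind Kv.finiteI_independent by blast
  let ?f = "\<lambda>u. \<Sum>v\<in>S. emb (u v) * v"
  have "Kv.span S = ?f ` (S \<rightarrow>\<^sub>E UNIV)"
  proof -
    have "Kv.span S = range ?f" using Kv.span_finite[OF fS] by simp
    also have "\<dots> = ?f ` (S \<rightarrow>\<^sub>E UNIV)"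
    proof
      show "range ?f \<subseteq> ?f ` (S \<rightarrow>\<^sub>E UNIV)"
      proof
        fix x assume "x \<in> range ?f"
        then obtain u where x: "x = ?f u" by blast
        have "x = ?f (restrict u S)" unfolding x by (rule sum.cong) auto
        moreover have "restrict u S \<in> S \<rightarrow>\<^sub>E UNIV" by simp
        ultimately show "x \<in> ?f ` (S \<rightarrow>\<^sub>E UNIV)" by (rule image_eqI)
      qed
    qed auto
    finally show ?thesis .
  qed
  moreover have "inj_on ?f (S \<rightarrow>\<^sub>E UNIV)"
  proof (rule inj_onI)
    fix u w assume u: "u \<in> S \<rightarrow>\<^sub>E UNIV" and w: "w \<in> S \<rightarrow>\<^sub>E UNIV" and e: "?f u = ?f w"
    have "(\<Sum>v\<in>S. emb (u v - w v) * v) = (\<Sum>v\<in>S. emb (u v) * v - emb (w v) * v)"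
      by (simp only: emb_diff left_diff_distrib)
    also have "\<dots> = ?f u - ?f w" by (rule sum_subtractf)
    finally have "(\<Sum>v\<in>S. emb (u v - w v) * v) = ?f u - ?f w" .
    then have z: "(\<Sum>v\<in>S. emb (u v - w v) * v) = 0" using e by (simp only: diff_self)
    have "\<forall>v\<in>S. u v - w v = 0"
    proof (rule ccontr)
      assume "\<not> (\<forall>v\<in>S. u v - w v = 0)"
      then obtain v where v: "v \<in> S" "u v - w v \<noteq> 0" by blast
      have "\<exists>uu. (\<exists>v\<in>S. uu v \<noteq> 0) \<and> (\<Sum>v\<in>S. emb (uu v) * v) = 0"
        by (rule exI[of _ "\<lambda>v. u v - w v"]) (intro conjI bexI[of _ v]; insert z v; assumption)
      then have "Kv.dependent S" unfolding Kv.dependent_finite[OF fS] .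
      then show False by (rule notE[OF ind])
    qed
    then show "u = w"
    proof (intro PiE_ext[OF u w])
      fix i assume "\<forall>v\<in>S. u v - w v = 0" "i \<in> S"
      then show "u i = w i" by simp
    qed
  qed
  ultimately have "card (Kv.span S) = card (S \<rightarrow>\<^sub>E (UNIV::'K set))"
    by (simp only: card_image)
  also have "\<dots> = CARD('K) ^ card S" by (simp add: card_PiE fS)
  finally show ?thesis .
qed


sublocale KP: finite_dimensional_vector_space_pair_1 "\<lambda>c (v::'F). emb c * v" "Kv.extend_basis {}" "\<lambda>c (v::'F). emb c * v"
  by unfold_locales

abbreviation klin :: "('F \<Rightarrow> 'F) \<Rightarrow> bool" where
  "klin h \<equiv> Vector_Spaces.linear (\<lambda>c (v::'F). emb c * v) (\<lambda>c v. emb c * v) h"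

definition GL :: "('F \<Rightarrow> 'F) set" where "GL = {h. klin h \<and> bij h}"

definition indset :: "'a set \<Rightarrow> 'F set \<Rightarrow> ('a \<Rightarrow> 'F) set" where
  "indset B W = {y \<in> B \<rightarrow>\<^sub>E UNIV. y ` B \<subseteq> W \<and> inj_on y B \<and> Kv.independent (y ` B)}"

lemma indset_insert:
  assumes b: "b \<notin> B"
  shows "indset (insert b B) W = (\<lambda>(y,v). y(b := v)) ` (SIGMA y:indset B W. W - Kv.span (y ` B))"
proof
  show "(\<lambda>(y,v). y(b := v)) ` (SIGMA y:indset B W. W - Kv.span (y ` B)) \<subseteq> indset (insert b B) W"
  proof clarify
    fix y v assume y: "y \<in> indset B W" and v: "v \<in> W" "v \<notin> Kv.span (y ` B)"
    have im: "y(b := v) ` insert b B = insert v (y ` B)" using b by auto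
    have vn: "v \<notin> y ` B" using v(2) Kv.span_superset by blast
    have "y(b := v) \<in> insert b B \<rightarrow>\<^sub>E UNIV" using y b unfolding indset_def by (auto simp: PiE_iff extensional_def)
    moreover have "y(b := v) ` insert b B \<subseteq> W" using y v unfolding im indset_def by auto
    moreover have "inj_on (y(b := v)) (insert b B)"
      using y vn b unfolding indset_def by (auto simp: inj_on_def)
    moreover have "Kv.independent (y(b := v) ` insert b B)"
      unfolding im by (rule Kv.independent_insertI[OF v(2)]) (use y in \<open>simp add: indset_def\<close>)
    ultimately show "y(b := v) \<in> indset (insert b B) W" unfolding indset_def by blast
  qed
next
  show "indset (insert b B) W \<subseteq> (\<lambda>(y,v). y(b := v)) ` (SIGMA y:indset B W. W - Kv.span (y ` B))"
  proof
    fix z assume z: "z \<in> indset (insert b B) W"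
    define y where "y = z(b := undefined)"
    have yB: "y ` B = z ` B" using b unfolding y_def by auto
    have "y \<in> B \<rightarrow>\<^sub>E UNIV" using z b unfolding y_def indset_def by (auto simp: PiE_iff extensional_def)
    moreover have "y ` B \<subseteq> W" using z unfolding yB indset_def by auto
    moreover have "inj_on y B" using z b unfolding indset_def y_def by (auto simp: inj_on_def)
    moreover have "Kv.independent (y ` B)" unfolding yB
      by (rule Kv.independent_mono[of "z ` insert b B"]) (use z in \<open>auto simp: indset_def\<close>)
    ultimately have yi: "y \<in> indset B W" unfolding indset_def by blast
    have zb: "z b \<notin> z ` B" using z b unfolding indset_def by (auto simp: inj_on_def)
    have "Kv.independent (insert (z b) (z ` B))" using z unfolding indset_def by simp
    then have "z b \<notin> Kv.span (y ` B)" using zb unfolding yB Kv.independent_insert by simp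
    moreover have "z b \<in> W" using z unfolding indset_def by auto
    ultimately have mem: "(y, z b) \<in> (SIGMA y:indset B W. W - Kv.span (y ` B))" using yi by blast
    have zeq: "z = y(b := z b)" unfolding y_def by simp
    have "z = (\<lambda>(y,v). y(b := v)) (y, z b)" unfolding prod.case by (rule zeq)
    then show "z \<in> (\<lambda>(y,v). y(b := v)) ` (SIGMA y:indset B W. W - Kv.span (y ` B))"
      using mem by (rule image_eqI)
  qed
qed

lemma indset_inj:
  assumes b: "b \<notin> B"
  shows "inj_on (\<lambda>(y,v). y(b := v)) (SIGMA y:indset B W. W - Kv.span (y ` B))"
proof (rule inj_onI, clarify)
  fix y1 v1 y2 v2
  assume y1: "y1 \<in> indset B W" and y2: "y2 \<in> indset B W" and e: "y1(b := v1) = y2(b := v2)"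
  have "v1 = v2" using fun_cong[OF e, of b] by simp
  moreover have "y1 = y2"
  proof
    fix x show "y1 x = y2 x"
    proof (cases "x = b")
      case True
      then have "x \<notin> B" using b by simp
      then show ?thesis using y1 y2 unfolding indset_def by (auto simp: PiE_iff extensional_def)
    next
      case False
      then show ?thesis using fun_cong[OF e, of x] by simp
    qed
  qed
  ultimately show "y1 = y2 \<and> v1 = v2" by simp
qed

lemma finite_indset: "finite B \<Longrightarrow> finite (indset B W)"
  unfolding indset_def by (rule finite_subset[of _ "B \<rightarrow>\<^sub>E UNIV"]) (auto intro: finite_PiE)

lemma card_indset:
  assumes "finite B" and W: "Kv.subspace W"
  shows "real (card (indset B W)) = (\<Prod>i<card B. real (card W) - real CARD('K) ^ i)"
  using assms(1)
proof (induction B rule: finite_induct)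
  case empty
  have e: "indset {} W = {\<lambda>_. undefined}" unfolding indset_def by (auto simp: Kv.independent_empty)
  have "card (indset {} W) = 1" unfolding e by simp
  then show ?case by simp
next
  case (insert b B)
  let ?S = "SIGMA y:indset B W. W - Kv.span (y ` B)"
  have "card (indset (insert b B) W) = card ?S"
    unfolding indset_insert[OF insert(2)] by (rule card_image[OF indset_inj[OF insert(2)]])
  also have "\<dots> = (\<Sum>y\<in>indset B W. card (W - Kv.span (y ` B)))"
    by (rule card_SigmaI) (auto intro: finite_indset insert(1))
  also have "\<dots> = (\<Sum>y\<in>indset B W. card W - CARD('K) ^ card B)"
  proof (rule sum.cong[OF refl])
    fix y assume y: "y \<in> indset B W"
    have sub: "Kv.span (y ` B) \<subseteq> W" by (rule Kv.span_minimal[OF _ W]) (use y in \<open>simp add: indset_def\<close>)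
    have "card (Kv.span (y ` B)) = CARD('K) ^ card (y ` B)" using y unfolding indset_def by (auto intro: card_span)
    also have "card (y ` B) = card B" using y unfolding indset_def by (auto intro: card_image)
    finally have "card (Kv.span (y ` B)) = CARD('K) ^ card B" .
    then show "card (W - Kv.span (y ` B)) = card W - CARD('K) ^ card B"
      using card_Diff_subset[OF _ sub] by simp
  qed
  also have "\<dots> = card (indset B W) * (card W - CARD('K) ^ card B)" by simp
  finally have c: "card (indset (insert b B) W) = card (indset B W) * (card W - CARD('K) ^ card B)" .
  have le: "CARD('K) ^ card B \<le> card W" if ne: "indset B W \<noteq> {}"
  proof -
    obtain y where y: "y \<in> indset B W" using ne by blast
    have sub: "Kv.span (y ` B) \<subseteq> W" by (rule Kv.span_minimal[OF _ W]) (use y in \<open>simp add: indset_def\<close>)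
    have "card (Kv.span (y ` B)) = CARD('K) ^ card (y ` B)" using y unfolding indset_def by (auto intro: card_span)
    also have "card (y ` B) = card B" using y unfolding indset_def by (auto intro: card_image)
    finally show ?thesis using card_mono[OF _ sub] by simp
  qed
  have "real (card (indset (insert b B) W)) = real (card (indset B W)) * (real (card W) - real CARD('K) ^ card B)"
  proof (cases "indset B W = {}")
    case True then show ?thesis unfolding c by simp
  next
    case False then show ?thesis unfolding c using le by (simp add: of_nat_diff)
  qed
  then show ?case using insert by (simp add: prod.lessThan_Suc)
qed


lemma rk_eq: "rk emb x = Kv.dim (set x)" unfolding rk_def by simp

lemma GL_bij: "h \<in> GL \<Longrightarrow> bij h" unfolding GL_def by simp
lemma GL_lin: "h \<in> GL \<Longrightarrow> klin h" unfolding GL_def by simp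
lemma GL_add: "h \<in> GL \<Longrightarrow> h (a + b) = h a + h b"
  using KP.linear_add[OF GL_lin] by blast
lemma GL_diff: "h \<in> GL \<Longrightarrow> h (a - b) = h a - h b"
  using KP.linear_diff[OF GL_lin] by blast

lemma GL_inv: "h \<in> GL \<Longrightarrow> inv h \<in> GL"
  unfolding GL_def using Kv.inj_linear_imp_inv_linear bij_imp_bij_inv bij_is_inj by blast

lemma rk_map_GL: assumes h: "h \<in> GL" shows "rk emb (map h x) = rk emb x"
proof -
  have "Kv.dim (h ` set x) = Kv.dim (set x)"
    by (rule KP.dim_image_eq[OF GL_lin[OF h]]) (use GL_bij[OF h] in \<open>auto simp: bij_def intro: inj_on_subset\<close>)
  then show ?thesis unfolding rk_eq by simp
qed

lemma ext_GL:
  assumes B: "Kv.independent B" and y: "y \<in> indset B UNIV"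
  shows "\<exists>h\<in>GL. \<forall>v\<in>B. h v = y v"
proof -
  have "Kv.independent (y ` B)" "inj_on y B" using y unfolding indset_def by auto
  from Kv.linear_independent_extend_inj[OF B this] obtain g where
    g: "klin g" "inj g" "\<forall>x\<in>B. g x = y x" by blast
  have "surj g" using g(2) finite_UNIV_inj_surj[of g] by simp
  then have "g \<in> GL" unfolding GL_def using g by (simp add: bij_def)
  then show ?thesis using g(3) by blast
qed

definition orbit :: "'F list \<Rightarrow> 'F list set" where
  "orbit x = (\<lambda>h. map h x) ` GL"

lemma finite_orbit: "finite (orbit x)"
proof -
  have "finite (GL :: ('F \<Rightarrow> 'F) set)" by (rule finite_subset[of _ UNIV]) auto
  then show ?thesis unfolding orbit_def by simp
qed

lemma card_orbit:
  "real (card (orbit x)) \<ge> (\<Prod>i<rk emb x. real CARD('F) - real CARD('K) ^ i)"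
proof -
  obtain B where B: "B \<subseteq> set x" "Kv.independent B" "set x \<subseteq> Kv.span B" "card B = Kv.dim (set x)"
    using Kv.basis_exists by blast
  have fB: "finite B" using B(2) Kv.finiteI_independent by blast
  define ext where "ext y = (SOME h. h \<in> GL \<and> (\<forall>v\<in>B. h v = y v))" for y
  have ext: "ext y \<in> GL \<and> (\<forall>v\<in>B. ext y v = y v)" if "y \<in> indset B UNIV" for y
  proof -
    have "\<exists>h. h \<in> GL \<and> (\<forall>v\<in>B. h v = y v)" using ext_GL[OF B(2) that] by blast
    then show ?thesis unfolding ext_def by (rule someI_ex)
  qed
  have inj: "inj_on (\<lambda>y. map (ext y) x) (indset B UNIV)"
  proof (rule inj_onI)
    fix y1 y2 assume y1: "y1 \<in> indset B UNIV" and y2: "y2 \<in> indset B UNIV"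
      and e: "map (ext y1) x = map (ext y2) x"
    have m: "\<forall>z\<in>set x. ext y1 z = ext y2 z" using e by (simp only: map_eq_conv)
    have "y1 v = y2 v" if v: "v \<in> B" for v
    proof -
      have "y1 v = ext y1 v" using ext[OF y1] v by simp
      also have "\<dots> = ext y2 v" using m v B(1) by blast
      also have "\<dots> = y2 v" using ext[OF y2] v by simp
      finally show ?thesis .
    qed
    moreover have "y1 \<in> B \<rightarrow>\<^sub>E UNIV" "y2 \<in> B \<rightarrow>\<^sub>E UNIV" using y1 y2 unfolding indset_def by auto
    ultimately show "y1 = y2" by (metis PiE_ext)
  qed
  have sub: "(\<lambda>y. map (ext y) x) ` indset B UNIV \<subseteq> orbit x"
    unfolding orbit_def using ext by blast
  have "card (indset B UNIV) \<le> card (orbit x)"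
    using card_inj_on_le[OF inj sub finite_orbit] .
  moreover have "real (card (indset B UNIV)) = (\<Prod>i<card B. real (card (UNIV::'F set)) - real CARD('K) ^ i)"
    by (rule card_indset[OF fB Kv.subspace_UNIV])
  ultimately show ?thesis unfolding rk_eq B(4) by simp
qed

lemma orbit_sym: "a \<in> orbit b \<Longrightarrow> b \<in> orbit a"
proof -
  assume "a \<in> orbit b"
  then obtain h where h: "h \<in> GL" "a = map h b" unfolding orbit_def by blast
  have "map (inv h) a = b" unfolding h(2) using GL_bij[OF h(1)] by (simp add: bij_is_inj)
  then show "b \<in> orbit a" unfolding orbit_def using GL_inv[OF h(1)] by blast
qed

lemma orbit_rk: "a \<in> orbit b \<Longrightarrow> rk emb a = rk emb b"
  unfolding orbit_def using rk_map_GL by auto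

lemma orbit_len: "a \<in> orbit b \<Longrightarrow> length a = length b"
  unfolding orbit_def by auto


lemma klin_expand:
  assumes h: "klin h" and fB: "finite B"
  shows "h (\<Sum>v\<in>B. emb (u v) * v) = (\<Sum>v\<in>B. emb (u v) * h v)"
proof -
  have "h (\<Sum>v\<in>B. emb (u v) * v) = (\<Sum>v\<in>B. h (emb (u v) * v))" by (rule KP.linear_sum[OF h])
  also have "\<dots> = (\<Sum>v\<in>B. emb (u v) * h v)"
    by (rule sum.cong[OF refl]) (rule KP.linear_scale[OF h])
  finally show ?thesis .
qed

lemma orbit_code_bound:
  assumes P: "\<forall>a\<in>P. \<forall>b\<in>P. a \<noteq> b \<longrightarrow> 2 * t < rk emb (vsub a b)"
    and w: "2 * t \<le> rk emb x"
  shows "card (P \<inter> orbit x) \<le> CARD('F) ^ (rk emb x - 2 * t)"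
proof -
  obtain B where B: "B \<subseteq> set x" "Kv.independent B" "set x \<subseteq> Kv.span B" "card B = Kv.dim (set x)"
    using Kv.basis_exists by blast
  have fB: "finite B" using B(2) Kv.finiteI_independent by blast
  have "2 * t \<le> card B" using w B(4) unfolding rk_eq by simp
  then obtain B1 where B1: "B1 \<subseteq> B" "card B1 = 2 * t" "finite B1"
    using obtain_subset_with_card_n by metis
  define B2 where "B2 = B - B1"
  have cB2: "card B2 = rk emb x - 2 * t" unfolding B2_def rk_eq B(4)[symmetric]
    using card_Diff_subset[OF B1(3) B1(1)] B1(2) by simp
  have fB2: "finite B2" unfolding B2_def using fB by simp
  have "\<exists>u. z = (\<Sum>v\<in>B. emb (u v) * v)" if "z \<in> set x" for z
  proof -
    have "z \<in> Kv.span B" using that B(3) by blast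
    then show ?thesis unfolding Kv.span_finite[OF fB] by blast
  qed
  then obtain u where u: "\<And>z. z \<in> set x \<Longrightarrow> z = (\<Sum>v\<in>B. emb (u z v) * v)" by metis
  define hh where "hh a = (SOME h. h \<in> GL \<and> a = map h x)" for a
  have hh: "hh a \<in> GL \<and> a = map (hh a) x" if "a \<in> orbit x" for a
  proof -
    have "\<exists>h. h \<in> GL \<and> a = map h x" using that unfolding orbit_def by blast
    then show ?thesis unfolding hh_def by (rule someI_ex)
  qed
  define T where "T a = restrict (hh a) B2" for a
  have inj: "inj_on T (P \<inter> orbit x)"
  proof (rule inj_onI, rule ccontr)
    fix a1 a2 assume a1: "a1 \<in> P \<inter> orbit x" and a2: "a2 \<in> P \<inter> orbit x" and e: "T a1 = T a2"
      and ne: "a1 \<noteq> a2"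
    define h1 where "h1 = hh a1"
    define h2 where "h2 = hh a2"
    let ?h1 = h1 and ?h2 = h2
    have h1: "?h1 \<in> GL" "a1 = map ?h1 x" using hh a1 unfolding h1_def by auto
    have h2: "?h2 \<in> GL" "a2 = map ?h2 x" using hh a2 unfolding h2_def by auto
    have eqB2: "?h1 v = ?h2 v" if "v \<in> B2" for v
      using fun_cong[OF e, of v] that unfolding T_def h1_def h2_def by simp
    have lt: "2 * t < rk emb (vsub a1 a2)" using P a1 a2 ne by blast
    define D where "D = (\<lambda>v. ?h1 v - ?h2 v) ` B1"
    have "set (vsub a1 a2) \<subseteq> Kv.span D"
    proof
      fix y assume "y \<in> set (vsub a1 a2)"
      then obtain z where z: "z \<in> set x" "y = ?h1 z - ?h2 z"
        unfolding h1(2) h2(2) vsub_map by auto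
      have "?h1 z - ?h2 z = (\<Sum>v\<in>B. emb (u z v) * ?h1 v) - (\<Sum>v\<in>B. emb (u z v) * ?h2 v)"
        using u[OF z(1)] klin_expand[OF GL_lin[OF h1(1)] fB, of "u z"] klin_expand[OF GL_lin[OF h2(1)] fB, of "u z"]
        by metis
      also have "\<dots> = (\<Sum>v\<in>B. emb (u z v) * (?h1 v - ?h2 v))"
        by (simp add: sum_subtractf right_diff_distrib)
      also have "\<dots> = (\<Sum>v\<in>B1. emb (u z v) * (?h1 v - ?h2 v))"
      proof (rule sum.mono_neutral_right[OF fB B1(1)])
        show "\<forall>i\<in>B - B1. emb (u z i) * (?h1 i - ?h2 i) = 0" using eqB2 unfolding B2_def by simp
      qed
      also have "\<dots> \<in> Kv.span D"
        by (rule Kv.span_sum, rule Kv.span_scale, rule Kv.span_base) (auto simp: D_def)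
      finally show "y \<in> Kv.span D" using z(2) by simp
    qed
    then have "rk emb (vsub a1 a2) \<le> card D" unfolding rk_eq
      by (rule Kv.dim_le_card) (simp add: D_def B1(3))
    also have "card D \<le> card B1" unfolding D_def by (rule card_image_le[OF B1(3)])
    finally show False using lt B1(2) by simp
  qed
  have sub: "T ` (P \<inter> orbit x) \<subseteq> B2 \<rightarrow>\<^sub>E (UNIV::'F set)" unfolding T_def by auto
  have "card (P \<inter> orbit x) \<le> card (B2 \<rightarrow>\<^sub>E (UNIV::'F set))"
    by (rule card_inj_on_le[OF inj sub]) (simp add: finite_PiE fB2)
  also have "\<dots> = CARD('F) ^ (rk emb x - 2 * t)" by (simp add: card_PiE fB2 cB2)
  finally show ?thesis .
qed


lemma card_K_ge2: "CARD('K) \<ge> 2"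
proof -
  have "card {0::'K, 1} = 2" by simp
  moreover have "card {0::'K, 1} \<le> CARD('K)" by (rule card_mono) auto
  ultimately show ?thesis by simp
qed

lemma basis_card:
  assumes qm: "CARD('F) = CARD('K) ^ m" and E: "Kv.independent E" "Kv.span E = UNIV"
  shows "card E = m"
proof -
  have "CARD('K) ^ card E = CARD('K) ^ m" using card_span[OF E(1)] E(2) qm by simp
  then show ?thesis using card_K_ge2 by simp
qed

lemma Bt_bound:
  assumes qm: "CARD('F) = CARD('K) ^ m" and tm: "t \<le> m"
  shows "real (card {u::'F list. length u = n \<and> rk emb u \<le> t}) * (\<Prod>i<t. real CARD('K)^t - real CARD('K)^i)
     \<le> real CARD('K)^(m*t) * real CARD('K)^(t*n)"
proof -
  define Q where "Q = CARD('K)"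
  have Q2: "Q \<ge> 2" unfolding Q_def by (rule card_K_ge2)
  define T where "T = {..<t}"
  define I where "I = indset T UNIV"
  define Subs where "Subs = (\<lambda>y. Kv.span (y ` T)) ` I"
  have fT: "finite T" "card T = t" unfolding T_def by auto
  have fI: "finite I" unfolding I_def by (rule finite_indset[OF fT(1)])
  have fSubs: "finite Subs" unfolding Subs_def using fI by simp
  have cardSy: "card (Kv.span (y ` T)) = Q ^ t" if "y \<in> indset T W" for y W
  proof -
    have "card (Kv.span (y ` T)) = Q ^ card (y ` T)" unfolding Q_def
      by (rule card_span) (use that in \<open>simp add: indset_def\<close>)
    also have "card (y ` T) = t" using that fT unfolding indset_def by (simp add: card_image)
    finally show ?thesis .
  qed
  have Ssub: "Kv.subspace S" if "S \<in> Subs" for S using that unfolding Subs_def by auto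
  have Scard: "card S = Q ^ t" if "S \<in> Subs" for S
    using that cardSy unfolding Subs_def I_def by auto
  have spanS: "Kv.span (y ` T) = S" if S: "S \<in> Subs" and y: "y \<in> indset T S" for S y
  proof (rule card_subset_eq)
    show "finite S" by simp
    show "Kv.span (y ` T) \<subseteq> S"
      by (rule Kv.span_minimal[OF _ Ssub[OF S]]) (use y in \<open>simp add: indset_def\<close>)
    show "card (Kv.span (y ` T)) = card S" using cardSy[OF y] Scard[OF S] by simp
  qed
  have disj: "\<forall>S1\<in>Subs. \<forall>S2\<in>Subs. S1 \<noteq> S2 \<longrightarrow> indset T S1 \<inter> indset T S2 = {}"
    using spanS by blast
  have UnI: "(\<Union>S\<in>Subs. indset T S) \<subseteq> I" unfolding I_def indset_def by auto
  have "card (\<Union>S\<in>Subs. indset T S) = (\<Sum>S\<in>Subs. card (indset T S))"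
    by (rule card_UN_disjoint[OF fSubs _ disj]) (auto intro: finite_indset fT)
  then have "real (card (\<Union>S\<in>Subs. indset T S)) = (\<Sum>S\<in>Subs. real (card (indset T S)))" by simp
  also have "\<dots> = (\<Sum>S\<in>Subs. (\<Prod>i<t. real Q^t - real Q^i))"
  proof (rule sum.cong[OF refl])
    fix S assume S: "S \<in> Subs"
    show "real (card (indset T S)) = (\<Prod>i<t. real Q^t - real Q^i)"
      using card_indset[OF fT(1) Ssub[OF S]] Scard[OF S] fT(2) unfolding Q_def by simp
  qed
  also have "\<dots> = real (card Subs) * (\<Prod>i<t. real Q^t - real Q^i)" by simp
  finally have A1: "real (card Subs) * (\<Prod>i<t. real Q^t - real Q^i) \<le> real (card I)"
    using card_mono[OF fI UnI] by linarith
  have A2: "real (card I) \<le> real Q ^ (m*t)"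
  proof -
    have "real (card I) = (\<Prod>i<t. real (CARD('F)) - real Q ^ i)"
      unfolding I_def Q_def using card_indset[OF fT(1) Kv.subspace_UNIV] fT(2) by simp
    also have "\<dots> \<le> (\<Prod>i<t. real Q ^ m)"
    proof (rule prod_mono)
      fix i assume i: "i \<in> {..<t}"
      have "real Q ^ i \<le> real Q ^ m" using i tm Q2 by (intro power_increasing) auto
      then show "0 \<le> real (CARD('F)) - real Q ^ i \<and> real (CARD('F)) - real Q ^ i \<le> real Q ^ m"
        using qm Q2 unfolding Q_def by simp
    qed
    also have "\<dots> = real Q ^ (m*t)" by (simp add: power_mult)
    finally show ?thesis .
  qed
  define Bt where "Bt = {u::'F list. length u = n \<and> rk emb u \<le> t}"
  have cover: "Bt \<subseteq> (\<Union>S\<in>Subs. {u. set u \<subseteq> S \<and> length u = n})"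
  proof
    fix u assume u: "u \<in> Bt"
    obtain B0 where B0: "B0 \<subseteq> set u" "Kv.independent B0" "set u \<subseteq> Kv.span B0" "card B0 = Kv.dim (set u)"
      using Kv.basis_exists by blast
    have cB0: "card B0 \<le> t" using u B0(4) unfolding Bt_def rk_eq by simp
    define E where "E = Kv.extend_basis B0"
    have E: "B0 \<subseteq> E" "Kv.independent E" "Kv.span E = UNIV"
      unfolding E_def using B0(2) Kv.extend_basis_superset Kv.independent_extend_basis Kv.span_extend_basis
      by blast+
    have fE: "finite E" using E(2) Kv.finiteI_independent by blast
    have cE: "card E = m" by (rule basis_card[OF qm E(2,3)])
    have fB0: "finite B0" using fE E(1) finite_subset by blast
    have "t - card B0 \<le> card (E - B0)" using card_Diff_subset[OF fB0 E(1)] cE tm by simp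
    then obtain D where D: "D \<subseteq> E - B0" "card D = t - card B0" "finite D"
      using obtain_subset_with_card_n by metis
    define B1 where "B1 = B0 \<union> D"
    have fB1: "finite B1" unfolding B1_def using fB0 D(3) by simp
    have cB1: "card B1 = t" unfolding B1_def using card_Un_disjoint[OF fB0 D(3)] D cB0 by auto
    have iB1: "Kv.independent B1"
      by (rule Kv.independent_mono[OF E(2)]) (use D E(1) in \<open>auto simp: B1_def\<close>)
    obtain f where f: "bij_betw f {0..<card B1} B1" using ex_bij_betw_nat_finite[OF fB1] by blast
    have TT: "{0..<card B1} = T" unfolding T_def cB1 by auto
    define y where "y = restrict f T"
    have yT: "y ` T = B1" using f unfolding TT y_def bij_betw_def by auto
    have "y \<in> I" unfolding I_def indset_def
    proof (intro CollectI conjI)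
      show "y \<in> T \<rightarrow>\<^sub>E UNIV" unfolding y_def by simp
      show "y ` T \<subseteq> UNIV" by simp
      show "inj_on y T" using f unfolding TT y_def bij_betw_def inj_on_def by auto
      show "Kv.independent (y ` T)" unfolding yT by (rule iB1)
    qed
    then have "Kv.span B1 \<in> Subs" unfolding Subs_def using yT by (metis image_eqI)
    moreover have "set u \<subseteq> Kv.span B1"
      using B0(3) Kv.span_mono[of B0 B1] unfolding B1_def by blast
    ultimately show "u \<in> (\<Union>S\<in>Subs. {u. set u \<subseteq> S \<and> length u = n})"
      using u unfolding Bt_def by blast
  qed
  have "card Bt \<le> card (\<Union>S\<in>Subs. {u. set u \<subseteq> S \<and> length u = n})"
    by (rule card_mono[OF _ cover]) (use fSubs in \<open>auto intro: finite_lists_length_eq\<close>)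
  also have "\<dots> \<le> (\<Sum>S\<in>Subs. card {u. set u \<subseteq> S \<and> length u = n})"
    by (rule card_UN_le[OF fSubs])
  also have "\<dots> = (\<Sum>S\<in>Subs. Q ^ (t*n))"
  proof (rule sum.cong[OF refl])
    fix S assume S: "S \<in> Subs"
    show "card {u. set u \<subseteq> S \<and> length u = n} = Q ^ (t*n)"
      using card_lists_length_eq[of S n] Scard[OF S] by (simp add: power_mult)
  qed
  also have "\<dots> = card Subs * Q ^ (t*n)" by simp
  finally have B1: "real (card Bt) \<le> real (card Subs) * real Q ^ (t*n)"
    by (metis of_nat_le_iff of_nat_mult of_nat_power)
  have pnn: "0 \<le> (\<Prod>i<t. real Q^t - real Q^i)"
    by (rule prod_nonneg) (use Q2 in \<open>auto intro!: power_increasing\<close>)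
  have "real (card Bt) * (\<Prod>i<t. real Q^t - real Q^i) \<le> real (card Subs) * real Q ^ (t*n) * (\<Prod>i<t. real Q^t - real Q^i)"
    by (rule mult_right_mono[OF B1 pnn])
  also have "\<dots> = (real (card Subs) * (\<Prod>i<t. real Q^t - real Q^i)) * real Q ^ (t*n)" by simp
  also have "\<dots> \<le> real Q ^ (m*t) * real Q ^ (t*n)"
    using order_trans[OF A1 A2] by (intro mult_right_mono) auto
  finally show ?thesis unfolding Bt_def Q_def .
qed


lemma GL_id: "id \<in> GL" unfolding GL_def using Kv.linear_id by simp

lemma rk_le_len: "rk emb x \<le> length x"
  unfolding rk_eq using Kv.dim_le_card'[of "set x"] card_length[of x] by simp

lemma vadd_inj:
  assumes "length x1 = n" "length x2 = n" "length u = n" "vadd x1 u = vadd x2 u"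
  shows "x1 = x2"
proof (rule nth_equalityI)
  show "length x1 = length x2" using assms by simp
  fix i assume "i < length x1"
  then have i: "i < n" using assms by simp
  have "vadd x1 u ! i = vadd x2 u ! i" using assms(4) by simp
  then have "x1 ! i + u ! i = x2 ! i + u ! i" using i assms(1-3) by (simp add: nth_vadd)
  then show "x1 ! i = x2 ! i" by simp
qed

lemma g_inv:
  assumes h: "h \<in> GL" and lx: "length x = n"
  shows "card {u \<in> {u. length u = n \<and> rk emb u \<le> t}. rk emb (vadd (map h x) u) = r}
       = card {u \<in> {u. length u = n \<and> rk emb u \<le> t}. rk emb (vadd x u) = r}"
proof -
  let ?A = "{u \<in> {u. length u = n \<and> rk emb u \<le> t}. rk emb (vadd x u) = r}"
  let ?A' = "{u \<in> {u. length u = n \<and> rk emb u \<le> t}. rk emb (vadd (map h x) u) = r}"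
  have hb: "bij h" using GL_bij[OF h] .
  have mv: "map h (vadd x u) = vadd (map h x) (map h u)" for u by (rule map_vadd) (rule GL_add[OF h])
  have "?A' = map h ` ?A"
  proof
    show "map h ` ?A \<subseteq> ?A'"
    proof
      fix u' assume "u' \<in> map h ` ?A"
      then obtain u where u: "u \<in> ?A" "u' = map h u" by blast
      have "rk emb (vadd (map h x) (map h u)) = rk emb (vadd x u)"
        using rk_map_GL[OF h, of "vadd x u"] mv[of u] by simp
      moreover have "rk emb (map h u) = rk emb u" by (rule rk_map_GL[OF h])
      ultimately show "u' \<in> ?A'" using u by simp
    qed
    show "?A' \<subseteq> map h ` ?A"
    proof
      fix u' assume u': "u' \<in> ?A'"
      define u where "u = map (inv h) u'"
      have uu: "map h u = u'" unfolding u_def using hb by (simp add: bij_is_surj surj_f_inv_f map_idI)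
      have "rk emb u = rk emb u'" unfolding u_def by (rule rk_map_GL[OF GL_inv[OF h]])
      moreover have "rk emb (vadd x u) = rk emb (vadd (map h x) u')"
        using rk_map_GL[OF h, of "vadd x u"] mv[of u] uu by simp
      moreover have "length u = n" using u' unfolding u_def by simp
      ultimately have "u \<in> ?A" using u' by simp
      then show "u' \<in> map h ` ?A" using uu by blast
    qed
  qed
  moreover have "inj_on (map h) ?A"
  proof -
    have "inj (map h)" using hb bij_is_inj inj_mapI by blast
    then show ?thesis using inj_on_subset by blast
  qed
  ultimately show ?thesis by (simp add: card_image)
qed

lemma count_bound:
  assumes qm: "CARD('F) = CARD('K) ^ m" and nm: "n \<le> m" and tn: "2 * t < n"
    and C_len: "\<forall>x\<in>C. length x = n" and c: "c \<in> C"
    and mind: "\<forall>c1\<in>C. \<forall>c2\<in>C. c1 \<noteq> c2 \<longrightarrow> 2 * t < rk emb (vsub c1 c2)"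
  shows "real (card {e. length e = n \<and> rk emb e = r \<and> decoder_error emb C t c e})
     \<le> real (card {e::'F list. length e = n \<and> rk emb e = r}) /
        (real CARD('K) ^ (t*t) * (\<Prod>j<m. 1 - 1/real CARD('K)^Suc j) * (\<Prod>j<t. 1 - 1/real CARD('K)^Suc j))"
proof -
  define Q where "Q = CARD('K)"
  have Q2: "Q \<ge> 2" unfolding Q_def by (rule card_K_ge2)
  have Q1: "real Q > 1" using Q2 by simp
  define Km where "Km = (\<Prod>j<m. 1 - 1/real Q^Suc j)"
  define Kt where "Kt = (\<Prod>j<t. 1 - 1/real Q^Suc j)"
  have Kmpos: "Km > 0" unfolding Km_def using K_props[OF Q1] by (meson less_trans)
  have Ktpos: "Kt > 0" unfolding Kt_def using K_props[OF Q1] by (meson less_trans)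
  define V where "V = {x::'F list. length x = n}"
  have fV: "finite V" unfolding V_def using finite_lists_length_eq[of "UNIV::'F set" n] by simp
  define Bt where "Bt = {u::'F list. length u = n \<and> rk emb u \<le> t}"
  have fBt: "finite Bt" by (rule rev_finite_subset[OF fV]) (auto simp: V_def Bt_def)
  define X where "X = {vsub c' c | c'. c' \<in> C \<and> c' \<noteq> c}"
  define g where "g x = real (card {u \<in> Bt. rk emb (vadd x u) = r})" for x
  define Vr where "Vr = {e::'F list. length e = n \<and> rk emb e = r}"
  define Er where "Er = {e. length e = n \<and> rk emb e = r \<and> decoder_error emb C t c e}"
  define \<rho> where "\<rho> = 1 / (real Q ^ (2*t*m) * Km)"
  have rho0: "\<rho> \<ge> 0" unfolding \<rho>_def using Kmpos by simp
  have fC: "finite C" by (rule rev_finite_subset[OF fV]) (use C_len in \<open>auto simp: V_def\<close>)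
  have XV: "X \<subseteq> V" unfolding X_def V_def using C_len c by auto
  have fX: "finite X" using fV XV finite_subset by blast
  have vsubvsub: "vsub (vsub c1 c) (vsub c2 c) = vsub c1 c2" if "c1 \<in> C" "c2 \<in> C" for c1 c2
    by (rule nth_equalityI) (use that C_len c in \<open>auto simp: nth_vsub\<close>)
  have Xsep: "\<forall>a\<in>X. \<forall>b\<in>X. a \<noteq> b \<longrightarrow> 2 * t < rk emb (vsub a b)"
  proof (intro ballI impI)
    fix a b assume a: "a \<in> X" and b: "b \<in> X" and ab: "a \<noteq> b"
    obtain c1 where c1: "c1 \<in> C" "a = vsub c1 c" using a unfolding X_def by blast
    obtain c2 where c2: "c2 \<in> C" "b = vsub c2 c" using b unfolding X_def by blast
    have "c1 \<noteq> c2" using ab c1 c2 by blast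
    then show "2 * t < rk emb (vsub a b)" using mind c1 c2 vsubvsub by simp
  qed
  have Xrk: "2 * t < rk emb x" if xX: "x \<in> X" for x
  proof -
    obtain c1 where c1: "c1 \<in> C" "c1 \<noteq> c" "x = vsub c1 c" using xX unfolding X_def by blast
    then show ?thesis using mind c by blast
  qed
  have i: "real (card Er) \<le> (\<Sum>x\<in>X. g x)"
  proof -
    have sub: "Er \<subseteq> (\<lambda>(x,u). vadd x u) ` (SIGMA x:X. {u \<in> Bt. rk emb (vadd x u) = r})"
    proof
      fix e assume e: "e \<in> Er"
      then obtain c' where c': "c' \<in> C" "c' \<noteq> c" "rk emb (vsub (vadd c e) c') \<le> t"
        unfolding Er_def decoder_error_def by blast
      have le: "length e = n" "rk emb e = r" using e unfolding Er_def by auto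
      define x where "x = vsub c' c"
      define u where "u = vsub (vadd c e) c'"
      have lc: "length c = n" "length c' = n" using C_len c c' by auto
      have xe: "vadd x u = e"
        by (rule nth_equalityI) (use lc le in \<open>auto simp: x_def u_def nth_vadd nth_vsub\<close>)
      have "x \<in> X" unfolding X_def x_def using c' by blast
      moreover have "u \<in> Bt" unfolding Bt_def u_def using c' lc le by simp
      moreover have "rk emb (vadd x u) = r" using xe le by simp
      ultimately show "e \<in> (\<lambda>(x,u). vadd x u) ` (SIGMA x:X. {u \<in> Bt. rk emb (vadd x u) = r})"
        using xe by force
    qed
    have "card Er \<le> card (SIGMA x:X. {u \<in> Bt. rk emb (vadd x u) = r})"
      by (rule order_trans[OF card_mono[OF _ sub] card_image_le]) (use fX fBt in auto)
    also have "\<dots> = (\<Sum>x\<in>X. card {u \<in> Bt. rk emb (vadd x u) = r})"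
      by (rule card_SigmaI[OF fX]) (simp add: fBt)
    finally have "real (card Er) \<le> real (\<Sum>x\<in>X. card {u \<in> Bt. rk emb (vadd x u) = r})"
      by (simp only: of_nat_le_iff)
    then show ?thesis unfolding g_def by (simp only: of_nat_sum)
  qed
  have ii: "(\<Sum>x\<in>X. g x) \<le> \<rho> * (\<Sum>y\<in>V. g y)"
  proof (rule avg_bound[OF fV XV _ _ _ _ _ rho0])
    show "\<forall>x\<in>X. orbit x \<subseteq> V" using XV orbit_len unfolding V_def by auto
    show "\<forall>x\<in>X. x \<in> orbit x" unfolding orbit_def using GL_id by force
    show "\<forall>x\<in>X. \<forall>y\<in>orbit x. g y = g x"
    proof (intro ballI)
      fix x y assume x: "x \<in> X" and y: "y \<in> orbit x"
      then obtain h where h: "h \<in> GL" "y = map h x" unfolding orbit_def by blast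
      have "length x = n" using x XV unfolding V_def by auto
      then show "g y = g x" unfolding g_def Bt_def h(2) using g_inv[OF h(1)] by simp
    qed
    show "\<forall>y\<in>V. g y \<ge> 0" unfolding g_def by simp
    show "\<forall>x\<in>X. \<forall>y\<in>orbit x. x \<in> orbit y" using orbit_sym by blast
    show "\<forall>x\<in>X. \<forall>y\<in>orbit x. real (card (X \<inter> orbit y)) \<le> \<rho> * real (card (orbit x))"
    proof (intro ballI)
      fix x y assume x: "x \<in> X" and y: "y \<in> orbit x"
      define w where "w = rk emb x"
      have wy: "rk emb y = w" using orbit_rk[OF y] unfolding w_def .
      have w2t: "2 * t < w" using Xrk[OF x] unfolding w_def .
      have wm: "w \<le> m" using rk_le_len[of x] x XV nm unfolding w_def V_def by auto
      have c1: "card (X \<inter> orbit y) \<le> Q ^ (m * (w - 2*t))"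
        using orbit_code_bound[OF Xsep, of y] wy w2t qm unfolding Q_def by (simp add: power_mult)
      have c2: "real (card (orbit x)) \<ge> real Q ^ (m*w) * Km"
      proof -
        have "real (card (orbit x)) \<ge> (\<Prod>i<w. real CARD('F) - real CARD('K) ^ i)"
          using card_orbit[of x] unfolding w_def .
        moreover have "(\<Prod>i<w. real CARD('F) - real CARD('K) ^ i) \<ge> real Q ^ (m*w) * Km"
          using prod_lower[OF Q1 wm] qm unfolding Km_def Q_def by simp
        ultimately show ?thesis by simp
      qed
      have "real (card (X \<inter> orbit y)) \<le> real (Q ^ (m * (w - 2*t)))"
        using c1 by (simp only: of_nat_le_iff)
      also have "\<dots> = real Q ^ (m * (w - 2*t))" by simp
      also have "\<dots> = \<rho> * (real Q ^ (m*w) * Km)"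
      proof -
        have "m * w = m * (w - 2*t) + 2*t*m" using w2t by (simp add: algebra_simps diff_mult_distrib2)
        then have "real Q ^ (m*w) = real Q ^ (m * (w - 2*t)) * real Q ^ (2*t*m)"
          by (simp add: power_add)
        then show ?thesis unfolding \<rho>_def using Kmpos Q1 by (simp add: field_simps)
      qed
      also have "\<dots> \<le> \<rho> * real (card (orbit x))" using c2 rho0 by (rule mult_left_mono)
      finally show "real (card (X \<inter> orbit y)) \<le> \<rho> * real (card (orbit x))" .
    qed
  qed
  have iii: "(\<Sum>y\<in>V. g y) \<le> real (card Bt) * real (card Vr)"
  proof -
    have "(\<Sum>y\<in>V. g y) = (\<Sum>y\<in>V. \<Sum>u\<in>Bt. if rk emb (vadd y u) = r then 1 else 0)"
      unfolding g_def by (rule sum.cong[OF refl]) (simp add: sum.inter_filter[OF fBt, symmetric])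
    also have "\<dots> = (\<Sum>u\<in>Bt. \<Sum>y\<in>V. if rk emb (vadd y u) = r then 1 else 0)" by (rule sum.swap)
    also have "\<dots> = (\<Sum>u\<in>Bt. real (card {y\<in>V. rk emb (vadd y u) = r}))"
      by (rule sum.cong[OF refl]) (simp add: sum.inter_filter[OF fV, symmetric])
    also have "\<dots> \<le> (\<Sum>u\<in>Bt. real (card Vr))"
    proof (rule sum_mono)
      fix u assume u: "u \<in> Bt"
      have "inj_on (\<lambda>y. vadd y u) {y\<in>V. rk emb (vadd y u) = r}"
        by (rule inj_onI) (rule vadd_inj[of _ n], use u in \<open>auto simp: V_def Bt_def\<close>)
      moreover have "(\<lambda>y. vadd y u) ` {y\<in>V. rk emb (vadd y u) = r} \<subseteq> Vr"
        using u unfolding V_def Bt_def Vr_def by auto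
      moreover have "finite Vr" by (rule rev_finite_subset[OF fV]) (auto simp: V_def Vr_def)
      ultimately have "card {y\<in>V. rk emb (vadd y u) = r} \<le> card Vr"
        by (rule card_inj_on_le)
      then show "real (card {y\<in>V. rk emb (vadd y u) = r}) \<le> real (card Vr)"
        by (simp only: of_nat_le_iff)
    qed
    also have "\<dots> = real (card Bt) * real (card Vr)" by simp
    finally show ?thesis .
  qed
  have iv: "\<rho> * real (card Bt) \<le> 1 / (real Q ^ (t*t) * Km * Kt)"
  proof -
    have tm: "t \<le> m" using tn nm by simp
    have bt: "real (card Bt) * (\<Prod>i<t. real Q^t - real Q^i) \<le> real Q^(m*t) * real Q^(t*n)"
      using Bt_bound[OF qm tm, of n] unfolding Bt_def Q_def .
    have pl: "(\<Prod>i<t. real Q^t - real Q^i) \<ge> real Q^(t*t) * Kt"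
      using prod_lower[OF Q1 order_refl[of t]] unfolding Kt_def .
    have pp: "real Q^(t*t) * Kt > 0" using Ktpos Q1 by simp
    have "real (card Bt) * (real Q^(t*t) * Kt) \<le> real Q^(m*t) * real Q^(t*n)"
      using order_trans[OF mult_left_mono[OF pl] bt] by simp
    then have "real (card Bt) \<le> real Q^(m*t) * real Q^(t*n) / (real Q^(t*t) * Kt)"
      using pp by (simp add: field_simps)
    also have "\<dots> \<le> real Q^(2*t*m) / (real Q^(t*t) * Kt)"
    proof -
      have "real Q^(m*t) * real Q^(t*n) = real Q ^ (m*t + t*n)" by (simp add: power_add)
      also have "\<dots> \<le> real Q ^ (2*t*m)" using nm Q1 by (intro power_increasing) auto
      finally show ?thesis using pp by (intro divide_right_mono) auto
    qed
    finally have "\<rho> * real (card Bt) \<le> \<rho> * (real Q^(2*t*m) / (real Q^(t*t) * Kt))"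
      using rho0 by (rule mult_left_mono)
    also have "\<dots> = 1 / (real Q ^ (t*t) * Km * Kt)"
      unfolding \<rho>_def using Kmpos Ktpos Q1 by (simp add: field_simps)
    finally show ?thesis .
  qed
  have "real (card Er) \<le> \<rho> * (real (card Bt) * real (card Vr))"
    using order_trans[OF i ii] iii rho0 by (meson mult_left_mono order_trans)
  also have "\<dots> = (\<rho> * real (card Bt)) * real (card Vr)" by simp
  also have "\<dots> \<le> (1 / (real Q ^ (t*t) * Km * Kt)) * real (card Vr)"
    using iv by (rule mult_right_mono) simp
  finally show ?thesis unfolding Er_def Vr_def Q_def Km_def Kt_def by simp
qed

end

lemma mrd_sep:
  assumes fC: "finite C" and dist: "min_rank_dist emb C = d"
  shows "\<forall>c1\<in>C. \<forall>c2\<in>C. c1 \<noteq> c2 \<longrightarrow> d \<le> rk emb (vsub c1 c2)"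
proof (intro ballI impI)
  fix c1 c2 assume c1: "c1 \<in> C" and c2: "c2 \<in> C" and ne: "c1 \<noteq> c2"
  let ?S = "{rk emb (vsub c d) | c d. c \<in> C \<and> d \<in> C \<and> c \<noteq> d}"
  have sub: "?S \<subseteq> (\<lambda>(c,d). rk emb (vsub c d)) ` (C \<times> C)" by auto
  have fS: "finite ?S" by (rule finite_subset[OF sub]) (use fC in simp)
  have "rk emb (vsub c1 c2) \<in> ?S" using c1 c2 ne by blast
  then have "Min ?S \<le> rk emb (vsub c1 c2)" using fS by (rule Min_le[rotated])
  then show "d \<le> rk emb (vsub c1 c2)" using dist unfolding min_rank_dist_def by simp
qed

theorem corollary3:
  fixes emb :: "'K::{finite,field} \<Rightarrow> 'F::{finite,field}"
    and q m n k t :: nat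
    and C :: "'F list set"
    and c :: "'F list"
    and p :: "'F list pmf"
  assumes emb: "field_embedding emb"
    and q: "CARD('K) = q"
    and qm: "CARD('F) = q ^ m"
    and nm: "n \<le> m"
    and k: "1 \<le> k" "k \<le> n"
    and C_len: "\<forall>x\<in>C. length x = n"
    and C_card: "card C = q ^ (m * k)"
    and dist: "min_rank_dist emb C = n - k + 1"
    and t: "n - k + 1 = 2 * t + 1"
    and c: "c \<in> C"
    and p_len: "\<forall>e\<in>set_pmf p. length e = n"
    and p_rank: "\<forall>e e'. length e = n \<longrightarrow> length e' = n \<longrightarrow> rk emb e = rk emb e'
                     \<longrightarrow> pmf p e = pmf p e'"
  shows "measure_pmf.prob p {e. decoder_error emb C t c e}
           < (prodinf (\<lambda>j. 1 - 1 / real q ^ Suc j)) powi (-2) * (1 / real q ^ (t^2))"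
proof -
  interpret embctx emb by unfold_locales (rule emb)
  have Q2: "q \<ge> 2" using card_K_ge2 q by simp
  have Q1: "real q > 1" using Q2 by simp
  define K where "K = prodinf (\<lambda>j. 1 - 1 / real q ^ Suc j)"
  define Km where "Km = (\<Prod>j<m. 1 - 1/real q^Suc j)"
  define Kt where "Kt = (\<Prod>j<t. 1 - 1/real q^Suc j)"
  have K0: "K > 0" unfolding K_def by (rule K_props(1)[OF Q1])
  have KKm: "K < Km" unfolding K_def Km_def by (rule K_props(2)[OF Q1])
  have KKt: "K < Kt" unfolding K_def Kt_def by (rule K_props(2)[OF Q1])
  define D where "D = real q ^ (t*t) * Km * Kt"
  have D0: "D > 0" unfolding D_def using K0 KKm KKt Q1 by simp
  have tn: "2 * t < n" using t k by simp
  define V where "V = {x::'F list. length x = n}"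
  have fV: "finite V" unfolding V_def using finite_lists_length_eq[of "UNIV::'F set" n] by simp
  have fC: "finite C" by (rule rev_finite_subset[OF fV]) (use C_len in \<open>auto simp: V_def\<close>)
  have mind: "\<forall>c1\<in>C. \<forall>c2\<in>C. c1 \<noteq> c2 \<longrightarrow> 2 * t < rk emb (vsub c1 c2)"
    using mrd_sep[OF fC dist] t by (simp add: Suc_le_eq)
  have qm': "CARD('F) = CARD('K) ^ m" using qm q by simp
  define E where "E = {e. decoder_error emb C t c e}"
  have cb: "real (card {e\<in>E \<inter> V. rk emb e = r}) \<le> real (card {e\<in>V. rk emb e = r}) / D" for r
  proof -
    have "{e\<in>E \<inter> V. rk emb e = r} = {e. length e = n \<and> rk emb e = r \<and> decoder_error emb C t c e}"
      unfolding E_def V_def by auto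
    moreover have "{e\<in>V. rk emb e = r} = {e. length e = n \<and> rk emb e = r}" unfolding V_def by auto
    ultimately show ?thesis
      using count_bound[OF qm' nm tn C_len c mind, of r] unfolding D_def Km_def Kt_def q by simp
  qed
  have "measure_pmf.prob p E = measure_pmf.prob p (E \<inter> set_pmf p)"
    by (simp add: measure_Int_set_pmf)
  also have "\<dots> \<le> measure_pmf.prob p (E \<inter> V)"
    by (rule measure_pmf.finite_measure_mono) (use p_len in \<open>auto simp: V_def\<close>)
  also have "\<dots> = (\<Sum>e\<in>E \<inter> V. pmf p e)"
    by (rule measure_measure_pmf_finite) (use fV in simp)
  also have "\<dots> = (\<Sum>r\<in>{..n}. \<Sum>e\<in>{e\<in>E \<inter> V. rk emb e = r}. pmf p e)"
    by (rule sum.group[symmetric]) (use fV rk_le_len in \<open>auto simp: V_def\<close>)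
  also have "\<dots> \<le> (\<Sum>r\<in>{..n}. (\<Sum>e\<in>{e\<in>V. rk emb e = r}. pmf p e) / D)"
  proof (rule sum_mono)
    fix r assume "r \<in> {..n}"
    show "(\<Sum>e\<in>{e\<in>E \<inter> V. rk emb e = r}. pmf p e) \<le> (\<Sum>e\<in>{e\<in>V. rk emb e = r}. pmf p e) / D"
    proof (cases "{e\<in>V. rk emb e = r} = {}")
      case True
      then have e1: "{e\<in>E \<inter> V. rk emb e = r} = {}" by auto
      show ?thesis unfolding e1 True by simp
    next
      case False
      then obtain e0 where e0: "e0 \<in> V" "rk emb e0 = r" by auto
      have const: "pmf p e = pmf p e0" if "e \<in> V" "rk emb e = r" for e
      proof -
        have "length e = n" "length e0 = n" using that(1) e0(1) unfolding V_def by auto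
        moreover have "rk emb e = rk emb e0" using that(2) e0(2) by simp
        ultimately show ?thesis using p_rank by blast
      qed
      have "(\<Sum>e\<in>{e\<in>E \<inter> V. rk emb e = r}. pmf p e) = real (card {e\<in>E \<inter> V. rk emb e = r}) * pmf p e0"
        using const by simp
      also have "\<dots> \<le> (real (card {e\<in>V. rk emb e = r}) / D) * pmf p e0"
        using cb[of r] by (rule mult_right_mono) simp
      also have "\<dots> = (\<Sum>e\<in>{e\<in>V. rk emb e = r}. pmf p e) / D"
        using const by simp
      finally show ?thesis .
    qed
  qed
  also have "\<dots> = (\<Sum>r\<in>{..n}. \<Sum>e\<in>{e\<in>V. rk emb e = r}. pmf p e) / D"
    by (simp add: sum_divide_distrib)
  also have "(\<Sum>r\<in>{..n}. \<Sum>e\<in>{e\<in>V. rk emb e = r}. pmf p e) = (\<Sum>e\<in>V. pmf p e)"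
    by (rule sum.group) (use fV rk_le_len in \<open>auto simp: V_def\<close>)
  also have "(\<Sum>e\<in>V. pmf p e) = measure_pmf.prob p V"
    by (rule measure_measure_pmf_finite[symmetric]) (rule fV)
  also have "measure_pmf.prob p V / D \<le> 1 / D"
    using D0 by (intro divide_right_mono) auto
  also have "1 / D < 1 / (real q ^ (t*t) * K * K)"
  proof -
    have a: "K * K < Km * Kt" by (rule mult_strict_mono) (use K0 KKm KKt in auto)
    have "real q ^ (t*t) * (K * K) < real q ^ (t*t) * (Km * Kt)"
      by (rule mult_strict_left_mono[OF a]) (use Q1 in simp)
    then have "real q ^ (t*t) * K * K < D" unfolding D_def by (simp add: mult.assoc)
    moreover have "0 < real q ^ (t*t) * K * K" using K0 Q1 by simp
    ultimately show ?thesis using D0 by (intro divide_strict_left_mono) auto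
  qed
  also have "1 / (real q ^ (t*t) * K * K) = K powi (-2) * (1 / real q ^ (t^2))"
    by (simp add: power2_eq_square power_int_minus field_simps)
  finally show ?thesis unfolding E_def K_def .
qed

end
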